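(* Let $\mathcal{E}$ and $\mathcal{S}$ be extensive categories with finite products and let $R : \mathcal{S} \to \mathcal{E}$ be a functor preserving finite coproducts. Suppose $R$ has a left adjoint $L : \mathcal{E}\to\mathcal{S}$ that preserves finite products, and that $R$ is closed under subobjects. Then for every decidable object $X$ of $\mathcal{E}$, the unit $X \to R(LX)$ is an isomorphism.
   Context: Extensive category: a category with finite coproducts such that $\mathcal{E}/X \times \mathcal{E}/Y \to \mathcal{E}/(X+Y)$ is an equivalence for all $X,Y$. A summand is a map $X\to Z$ for which there is $Y\to Z$ making $X\to Z\leftarrow Y$ a coproduct. An object $X$ is decidable if its diagonal $X\to X\times X$ is a summand. For an adjunction $L\dashv R : \mathcal{S}\to\mathcal{E}$, the right adjoint $R$ is said to be closed under subobjects if for every $A$ in $\mathcal{S}$ and every monomorphism $X \to RA$ in $\mathcal{E}$, the unit $X \to R(LX)$ is an isomorphism. *)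

theory Defs
  imports Main
begin

text \<open>A minimal, self-contained rendering of (locally small, set-based) categories.
  A category has a set of objects, hom-sets, a composition (Comp C g f is g after f)
  and identities.\<close>

record ('o, 'a) category =
  Ob   :: "'o set"
  Hom  :: "'o \<Rightarrow> 'o \<Rightarrow> 'a set"
  Comp :: "'a \<Rightarrow> 'a \<Rightarrow> 'a"
  Idt  :: "'o \<Rightarrow> 'a"

abbreviation arr :: "('o, 'a) category \<Rightarrow> 'a \<Rightarrow> 'o \<Rightarrow> 'o \<Rightarrow> bool" where
  "arr C f A B \<equiv> f \<in> Hom C A B"

definition is_category :: "('o, 'a) category \<Rightarrow> bool" where
  "is_category C \<longleftrightarrow>
     (\<forall>A B f. arr C f A B \<longrightarrow> A \<in> Ob C \<and> B \<in> Ob C) \<and>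
     (\<forall>A B A' B' f. arr C f A B \<longrightarrow> arr C f A' B' \<longrightarrow> A = A' \<and> B = B') \<and>
     (\<forall>A \<in> Ob C. arr C (Idt C A) A A) \<and>
     (\<forall>A B D f g. arr C f A B \<longrightarrow> arr C g B D \<longrightarrow> arr C (Comp C g f) A D) \<and>
     (\<forall>A B f. arr C f A B \<longrightarrow> Comp C (Idt C B) f = f \<and> Comp C f (Idt C A) = f) \<and>
     (\<forall>A B D E f g h. arr C f A B \<longrightarrow> arr C g B D \<longrightarrow> arr C h D E \<longrightarrow>
        Comp C h (Comp C g f) = Comp C (Comp C h g) f)"

definition iso :: "('o, 'a) category \<Rightarrow> 'a \<Rightarrow> 'o \<Rightarrow> 'o \<Rightarrow> bool" where
  "iso C f A B \<longleftrightarrow> arr C f A B \<and>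
     (\<exists>g. arr C g B A \<and> Comp C g f = Idt C A \<and> Comp C f g = Idt C B)"

definition mono :: "('o, 'a) category \<Rightarrow> 'a \<Rightarrow> 'o \<Rightarrow> 'o \<Rightarrow> bool" where
  "mono C m A B \<longleftrightarrow> arr C m A B \<and>
     (\<forall>T g h. arr C g T A \<longrightarrow> arr C h T A \<longrightarrow> Comp C m g = Comp C m h \<longrightarrow> g = h)"

definition initial :: "('o, 'a) category \<Rightarrow> 'o \<Rightarrow> bool" where
  "initial C I \<longleftrightarrow> I \<in> Ob C \<and> (\<forall>A \<in> Ob C. \<exists>!f. arr C f I A)"

definition terminal :: "('o, 'a) category \<Rightarrow> 'o \<Rightarrow> bool" where
  "terminal C T \<longleftrightarrow> T \<in> Ob C \<and> (\<forall>A \<in> Ob C. \<exists>!f. arr C f A T)"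

definition is_coproduct :: "('o, 'a) category \<Rightarrow> 'o \<Rightarrow> 'o \<Rightarrow> 'o \<Rightarrow> 'a \<Rightarrow> 'a \<Rightarrow> bool" where
  "is_coproduct C X Y Z i j \<longleftrightarrow> arr C i X Z \<and> arr C j Y Z \<and>
     (\<forall>W f g. arr C f X W \<longrightarrow> arr C g Y W \<longrightarrow>
        (\<exists>!h. arr C h Z W \<and> Comp C h i = f \<and> Comp C h j = g))"

definition is_product :: "('o, 'a) category \<Rightarrow> 'o \<Rightarrow> 'o \<Rightarrow> 'o \<Rightarrow> 'a \<Rightarrow> 'a \<Rightarrow> bool" where
  "is_product C X Y P p q \<longleftrightarrow> arr C p P X \<and> arr C q P Y \<and>
     (\<forall>W f g. arr C f W X \<longrightarrow> arr C g W Y \<longrightarrow>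
        (\<exists>!h. arr C h W P \<and> Comp C p h = f \<and> Comp C q h = g))"

definition has_finite_coproducts :: "('o, 'a) category \<Rightarrow> bool" where
  "has_finite_coproducts C \<longleftrightarrow> (\<exists>I. initial C I) \<and>
     (\<forall>X \<in> Ob C. \<forall>Y \<in> Ob C. \<exists>Z i j. is_coproduct C X Y Z i j)"

definition has_finite_products :: "('o, 'a) category \<Rightarrow> bool" where
  "has_finite_products C \<longleftrightarrow> (\<exists>T. terminal C T) \<and>
     (\<forall>X \<in> Ob C. \<forall>Y \<in> Ob C. \<exists>P p q. is_product C X Y P p q)"

text \<open>Given a coproduct diagram X --iX--> Z <--iY-- Y, the functor
  C/X x C/Y --> C/Z sends (a : A -> X, b : B -> Y) to the induced arrow
  c : A+B -> Z with c o u = iX o a, c o v = iY o b (for a coproduct A --u--> A+B <--v-- B),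
  and a pair of slice morphisms (f,g) to f+g.  The choice of coproducts is
  immaterial, so we quantify over all coproduct diagrams.  Equivalence of
  categories = essentially surjective + fully faithful.\<close>

definition coprod_functor_ess_surj ::
  "('o, 'a) category \<Rightarrow> 'o \<Rightarrow> 'o \<Rightarrow> 'o \<Rightarrow> 'a \<Rightarrow> 'a \<Rightarrow> bool" where
  "coprod_functor_ess_surj C X Y Z iX iY \<longleftrightarrow>
     (\<forall>W c. arr C c W Z \<longrightarrow>
        (\<exists>A B a b V u v c' k. arr C a A X \<and> arr C b B Y \<and> is_coproduct C A B V u v \<and>
           arr C c' V Z \<and> Comp C c' u = Comp C iX a \<and> Comp C c' v = Comp C iY b \<and>
           iso C k V W \<and> Comp C c k = c'))"

definition coprod_functor_fully_faithful ::
  "('o, 'a) category \<Rightarrow> 'o \<Rightarrow> 'o \<Rightarrow> 'o \<Rightarrow> 'a \<Rightarrow> 'a \<Rightarrow> bool" where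
  "coprod_functor_fully_faithful C X Y Z iX iY \<longleftrightarrow>
     (\<forall>A B a b W u v c A' B' a' b' W' u' v' c' h.
        arr C a A X \<longrightarrow> arr C b B Y \<longrightarrow> is_coproduct C A B W u v \<longrightarrow>
        arr C c W Z \<longrightarrow> Comp C c u = Comp C iX a \<longrightarrow> Comp C c v = Comp C iY b \<longrightarrow>
        arr C a' A' X \<longrightarrow> arr C b' B' Y \<longrightarrow> is_coproduct C A' B' W' u' v' \<longrightarrow>
        arr C c' W' Z \<longrightarrow> Comp C c' u' = Comp C iX a' \<longrightarrow> Comp C c' v' = Comp C iY b' \<longrightarrow>
        arr C h W W' \<longrightarrow> Comp C c' h = c \<longrightarrow>
        (\<exists>!fg. arr C (fst fg) A A' \<and> Comp C a' (fst fg) = a \<and>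
               arr C (snd fg) B B' \<and> Comp C b' (snd fg) = b \<and>
               Comp C h u = Comp C u' (fst fg) \<and> Comp C h v = Comp C v' (snd fg)))"

definition extensive :: "('o, 'a) category \<Rightarrow> bool" where
  "extensive C \<longleftrightarrow> is_category C \<and> has_finite_coproducts C \<and>
     (\<forall>X Y Z iX iY. is_coproduct C X Y Z iX iY \<longrightarrow>
        coprod_functor_ess_surj C X Y Z iX iY \<and> coprod_functor_fully_faithful C X Y Z iX iY)"

definition summand :: "('o, 'a) category \<Rightarrow> 'a \<Rightarrow> 'o \<Rightarrow> 'o \<Rightarrow> bool" where
  "summand C m X Z \<longleftrightarrow> (\<exists>Y n. is_coproduct C X Y Z m n)"

text \<open>X is decidable: its diagonal into (a) product X x X is a summand
  (independent of the choice of product).\<close>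
definition decidable_obj :: "('o, 'a) category \<Rightarrow> 'o \<Rightarrow> bool" where
  "decidable_obj C X \<longleftrightarrow> X \<in> Ob C \<and>
     (\<exists>P p q d. is_product C X X P p q \<and> arr C d X P \<and>
        Comp C p d = Idt C X \<and> Comp C q d = Idt C X \<and> summand C d X P)"

definition is_functor :: "('o, 'a) category \<Rightarrow> ('p, 'b) category \<Rightarrow>
    ('o \<Rightarrow> 'p) \<Rightarrow> ('a \<Rightarrow> 'b) \<Rightarrow> bool" where
  "is_functor C D Fo Fa \<longleftrightarrow>
     (\<forall>A \<in> Ob C. Fo A \<in> Ob D) \<and>
     (\<forall>A B f. arr C f A B \<longrightarrow> arr D (Fa f) (Fo A) (Fo B)) \<and>
     (\<forall>A \<in> Ob C. Fa (Idt C A) = Idt D (Fo A)) \<and>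
     (\<forall>A B E f g. arr C f A B \<longrightarrow> arr C g B E \<longrightarrow> Fa (Comp C g f) = Comp D (Fa g) (Fa f))"

definition preserves_finite_coproducts :: "('o, 'a) category \<Rightarrow> ('p, 'b) category \<Rightarrow>
    ('o \<Rightarrow> 'p) \<Rightarrow> ('a \<Rightarrow> 'b) \<Rightarrow> bool" where
  "preserves_finite_coproducts C D Fo Fa \<longleftrightarrow>
     (\<forall>I. initial C I \<longrightarrow> initial D (Fo I)) \<and>
     (\<forall>X Y Z i j. is_coproduct C X Y Z i j \<longrightarrow> is_coproduct D (Fo X) (Fo Y) (Fo Z) (Fa i) (Fa j))"

definition preserves_finite_products :: "('o, 'a) category \<Rightarrow> ('p, 'b) category \<Rightarrow>
    ('o \<Rightarrow> 'p) \<Rightarrow> ('a \<Rightarrow> 'b) \<Rightarrow> bool" where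
  "preserves_finite_products C D Fo Fa \<longleftrightarrow>
     (\<forall>T. terminal C T \<longrightarrow> terminal D (Fo T)) \<and>
     (\<forall>X Y P p q. is_product C X Y P p q \<longrightarrow> is_product D (Fo X) (Fo Y) (Fo P) (Fa p) (Fa q))"

text \<open>L -| R : S -> E with unit eta, given by the universal property of the unit
  (eta a natural transformation Id => R L, universal from each X to R).\<close>
definition is_adjunction :: "('o, 'a) category \<Rightarrow> ('p, 'b) category \<Rightarrow>
    ('o \<Rightarrow> 'p) \<Rightarrow> ('a \<Rightarrow> 'b) \<Rightarrow> ('p \<Rightarrow> 'o) \<Rightarrow> ('b \<Rightarrow> 'a) \<Rightarrow> ('o \<Rightarrow> 'a) \<Rightarrow> bool" where
  "is_adjunction E S Lo La Ro Ra \<eta> \<longleftrightarrow>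
     is_functor E S Lo La \<and> is_functor S E Ro Ra \<and>
     (\<forall>X \<in> Ob E. arr E (\<eta> X) X (Ro (Lo X))) \<and>
     (\<forall>X Y f. arr E f X Y \<longrightarrow> Comp E (Ra (La f)) (\<eta> X) = Comp E (\<eta> Y) f) \<and>
     (\<forall>X \<in> Ob E. \<forall>A \<in> Ob S. \<forall>f. arr E f X (Ro A) \<longrightarrow>
        (\<exists>!g. arr S g (Lo X) A \<and> Comp E (Ra g) (\<eta> X) = f))"

definition closed_under_subobjects :: "('o, 'a) category \<Rightarrow> ('p, 'b) category \<Rightarrow>
    ('o \<Rightarrow> 'p) \<Rightarrow> ('p \<Rightarrow> 'o) \<Rightarrow> ('o \<Rightarrow> 'a) \<Rightarrow> bool" where
  "closed_under_subobjects E S Lo Ro \<eta> \<longleftrightarrow>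
     (\<forall>A \<in> Ob S. \<forall>X m. mono E m X (Ro A) \<longrightarrow> iso E (\<eta> X) X (Ro (Lo X)))"

end

theory Submission
  imports Defs
begin

lemma cat_dom: "is_category C \<Longrightarrow> arr C f A B \<Longrightarrow> A \<in> Ob C"
  unfolding is_category_def by meson
lemma cat_cod: "is_category C \<Longrightarrow> arr C f A B \<Longrightarrow> B \<in> Ob C"
  unfolding is_category_def by meson
lemma cat_id: "is_category C \<Longrightarrow> A \<in> Ob C \<Longrightarrow> arr C (Idt C A) A A"
  unfolding is_category_def by meson
lemma cat_comp: "is_category C \<Longrightarrow> arr C f A B \<Longrightarrow> arr C g B D \<Longrightarrow> arr C (Comp C g f) A D"
  unfolding is_category_def by meson
lemma cat_idl: "is_category C \<Longrightarrow> arr C f A B \<Longrightarrow> Comp C (Idt C B) f = f"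
  unfolding is_category_def by meson
lemma cat_idr: "is_category C \<Longrightarrow> arr C f A B \<Longrightarrow> Comp C f (Idt C A) = f"
  unfolding is_category_def by meson
lemma cat_assoc: "is_category C \<Longrightarrow> arr C f A B \<Longrightarrow> arr C g B D \<Longrightarrow> arr C h D F \<Longrightarrow>
    Comp C h (Comp C g f) = Comp C (Comp C h g) f"
  unfolding is_category_def by meson

lemma initial_uniq: "is_category C \<Longrightarrow> initial C I \<Longrightarrow> arr C f I A \<Longrightarrow> arr C g I A \<Longrightarrow> f = g"
proof -
  assume c: "is_category C" and I: "initial C I" and f: "arr C f I A" and g: "arr C g I A"
  have "A \<in> Ob C" using cat_cod[OF c f] .
  then have "\<exists>!h. arr C h I A" using I unfolding initial_def by blast
  then show "f = g" using f g by blast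
qed
lemma initial_ex: "initial C I \<Longrightarrow> A \<in> Ob C \<Longrightarrow> \<exists>f. arr C f I A"
  unfolding initial_def by blast

lemma coprod_uniq:
  assumes "is_category C" "is_coproduct C X Y Z i j" "arr C h1 Z W" "arr C h2 Z W"
    "Comp C h1 i = Comp C h2 i" "Comp C h1 j = Comp C h2 j"
  shows "h1 = h2"
proof -
  have i: "arr C i X Z" and j: "arr C j Y Z" using assms(2) unfolding is_coproduct_def by auto
  have "\<exists>!h. arr C h Z W \<and> Comp C h i = Comp C h1 i \<and> Comp C h j = Comp C h1 j"
    using assms(2) cat_comp[OF assms(1) i assms(3)] cat_comp[OF assms(1) j assms(3)]
    unfolding is_coproduct_def by blast
  then show ?thesis using assms by metis
qed

lemma prod_uniq:
  assumes "is_category C" "is_product C X Y P p q" "arr C h1 W P" "arr C h2 W P"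
    "Comp C p h1 = Comp C p h2" "Comp C q h1 = Comp C q h2"
  shows "h1 = h2"
proof -
  have p: "arr C p P X" and q: "arr C q P Y" using assms(2) unfolding is_product_def by auto
  have "\<exists>!h. arr C h W P \<and> Comp C p h = Comp C p h1 \<and> Comp C q h = Comp C q h1"
    using assms(2) cat_comp[OF assms(1) assms(3) p] cat_comp[OF assms(1) assms(3) q]
    unfolding is_product_def by blast
  then show ?thesis using assms by metis
qed

lemma coprod_init_r:
  assumes c: "is_category C" and I: "initial C I" and e: "arr C e I B"
  shows "is_coproduct C B I B (Idt C B) e"
  unfolding is_coproduct_def
proof (intro conjI allI impI)
  have B: "B \<in> Ob C" using cat_cod[OF c e] .
  show "arr C (Idt C B) B B" using cat_id[OF c B] .
  show "arr C e I B" by fact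
  fix W f g assume f: "arr C f B W" and g: "arr C g I W"
  show "\<exists>!h. arr C h B W \<and> Comp C h (Idt C B) = f \<and> Comp C h e = g"
  proof (rule ex1I[of _ f])
    show "arr C f B W \<and> Comp C f (Idt C B) = f \<and> Comp C f e = g"
      using f cat_idr[OF c f] initial_uniq[OF c I cat_comp[OF c e f] g] by auto
  next
    fix h assume "arr C h B W \<and> Comp C h (Idt C B) = f \<and> Comp C h e = g"
    then show "h = f" using cat_idr[OF c] by metis
  qed
qed

lemma coprod_init_l:
  assumes c: "is_category C" and I: "initial C I" and e: "arr C e I B"
  shows "is_coproduct C I B B e (Idt C B)"
  unfolding is_coproduct_def
proof (intro conjI allI impI)
  have B: "B \<in> Ob C" using cat_cod[OF c e] .
  show "arr C (Idt C B) B B" using cat_id[OF c B] .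
  show "arr C e I B" by fact
  fix W f g assume g: "arr C g B W" and f: "arr C f I W"
  show "\<exists>!h. arr C h B W \<and> Comp C h e = f \<and> Comp C h (Idt C B) = g"
  proof (rule ex1I[of _ g])
    show "arr C g B W \<and> Comp C g e = f \<and> Comp C g (Idt C B) = g"
      using g cat_idr[OF c g] initial_uniq[OF c I cat_comp[OF c e g] f] by auto
  next
    fix h assume "arr C h B W \<and> Comp C h e = f \<and> Comp C h (Idt C B) = g"
    then show "h = g" using cat_idr[OF c] by metis
  qed
qed

lemma coprod_II:
  assumes c: "is_category C" and I: "initial C I"
  shows "is_coproduct C I I I (Idt C I) (Idt C I)"
proof -
  have "I \<in> Ob C" using I unfolding initial_def by auto
  then show ?thesis using coprod_init_r[OF c I cat_id[OF c]] by blast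
qed

section \<open>Extensive categories\<close>

lemma ext_cat: "extensive C \<Longrightarrow> is_category C"
  unfolding extensive_def by blast

lemma ext_init: "extensive C \<Longrightarrow> \<exists>I. initial C I"
  unfolding extensive_def has_finite_coproducts_def by blast

lemma ext_ff: "extensive C \<Longrightarrow> is_coproduct C X Y Z i j \<Longrightarrow> coprod_functor_fully_faithful C X Y Z i j"
  unfolding extensive_def by blast

lemma ext_es: "extensive C \<Longrightarrow> is_coproduct C X Y Z i j \<Longrightarrow> coprod_functor_ess_surj C X Y Z i j"
  unfolding extensive_def by blast

lemma ff_rule:
  assumes "coprod_functor_fully_faithful C X Y Z iX iY"
    "arr C a A X" "arr C b B Y" "is_coproduct C A B W u v"
    "arr C c W Z" "Comp C c u = Comp C iX a" "Comp C c v = Comp C iY b"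
    "arr C a' A' X" "arr C b' B' Y" "is_coproduct C A' B' W' u' v'"
    "arr C c' W' Z" "Comp C c' u' = Comp C iX a'" "Comp C c' v' = Comp C iY b'"
    "arr C h W W'" "Comp C c' h = c"
  shows "\<exists>fg. arr C (fst fg) A A' \<and> Comp C a' (fst fg) = a \<and>
               arr C (snd fg) B B' \<and> Comp C b' (snd fg) = b \<and>
               Comp C h u = Comp C u' (fst fg) \<and> Comp C h v = Comp C v' (snd fg)"
proof -
  have "\<exists>!fg. arr C (fst fg) A A' \<and> Comp C a' (fst fg) = a \<and>
               arr C (snd fg) B B' \<and> Comp C b' (snd fg) = b \<and>
               Comp C h u = Comp C u' (fst fg) \<and> Comp C h v = Comp C v' (snd fg)"
    using assms(1)[unfolded coprod_functor_fully_faithful_def, rule_format, OF assms(2-)] .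
  then show ?thesis by blast
qed

lemma strict_initial:
  assumes ext: "extensive C" and I: "initial C I" and f: "arr C f V I"
  shows "initial C V"
proof -
  have c: "is_category C" using ext_cat[OF ext] .
  have IO: "I \<in> Ob C" using I unfolding initial_def by auto
  have V: "V \<in> Ob C" using cat_dom[OF c f] .
  obtain e where e: "arr C e I V" using initial_ex[OF I V] by blast
  have idI: "arr C (Idt C I) I I" using cat_id[OF c IO] .
  have idV: "arr C (Idt C V) V V" using cat_id[OF c V] .
  have cpI: "is_coproduct C I I I (Idt C I) (Idt C I)" using coprod_II[OF c I] .
  have ff: "coprod_functor_fully_faithful C I I I (Idt C I) (Idt C I)" using ext_ff[OF ext cpI] .
  have cp1: "is_coproduct C V I V (Idt C V) e" using coprod_init_r[OF c I e] .
  have cp2: "is_coproduct C I V V e (Idt C V)" using coprod_init_l[OF c I e] .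
  have fe: "arr C (Comp C f e) I I" using cat_comp[OF c e f] .
  have eq1: "Comp C f (Idt C V) = Comp C (Idt C I) f" using cat_idr[OF c f] cat_idl[OF c f] by simp
  have eq2: "Comp C f e = Comp C (Idt C I) (Idt C I)"
    using initial_uniq[OF c I fe cat_comp[OF c idI idI]] .
  have eq3: "Comp C f (Idt C V) = f" using cat_idr[OF c f] .
  have "\<exists>fg. arr C (fst fg) V I \<and> Comp C (Idt C I) (fst fg) = f \<and>
               arr C (snd fg) I V \<and> Comp C f (snd fg) = Idt C I \<and>
               Comp C (Idt C V) (Idt C V) = Comp C e (fst fg) \<and> Comp C (Idt C V) e = Comp C (Idt C V) (snd fg)"
    using ff_rule[OF ff f idI cp1 f eq1 eq2 idI f cp2 f eq2 eq1 idV eq3] by blast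
  then obtain r where r: "arr C r V I" and rr: "Comp C (Idt C V) (Idt C V) = Comp C e r" by blast
  have idVe: "Idt C V = Comp C e r" using rr cat_idl[OF c idV] by simp
  show ?thesis unfolding initial_def
  proof (intro conjI ballI)
    show "V \<in> Ob C" by fact
    fix A assume A: "A \<in> Ob C"
    obtain eA where eA: "arr C eA I A" using initial_ex[OF I A] by blast
    show "\<exists>!x. arr C x V A"
    proof (rule ex1I[of _ "Comp C eA r"])
      show "arr C (Comp C eA r) V A" using cat_comp[OF c r eA] .
      fix x assume x: "arr C x V A"
      have "x = Comp C x (Comp C e r)" using idVe cat_idr[OF c x] by simp
      also have "\<dots> = Comp C (Comp C x e) r" using cat_assoc[OF c r e x] .
      also have "Comp C x e = eA" using initial_uniq[OF c I cat_comp[OF c e x] eA] .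
      finally show "x = Comp C eA r" .
    qed
  qed
qed

lemma disjoint:
  assumes ext: "extensive C" and cp: "is_coproduct C X Y Z i j"
    and al: "arr C \<alpha> B X" and be: "arr C \<beta> B Y" and eq: "Comp C i \<alpha> = Comp C j \<beta>"
  shows "initial C B"
proof -
  have c: "is_category C" using ext_cat[OF ext] .
  obtain I where I: "initial C I" using ext_init[OF ext] by blast
  have i: "arr C i X Z" and j: "arr C j Y Z" using cp unfolding is_coproduct_def by auto
  have Bo: "B \<in> Ob C" using cat_dom[OF c al] .
  have Xo: "X \<in> Ob C" using cat_cod[OF c al] .
  have Yo: "Y \<in> Ob C" using cat_cod[OF c be] .
  obtain eB where eB: "arr C eB I B" using initial_ex[OF I Bo] by blast
  obtain eX where eX: "arr C eX I X" using initial_ex[OF I Xo] by blast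
  obtain eY where eY: "arr C eY I Y" using initial_ex[OF I Yo] by blast
  have ff: "coprod_functor_fully_faithful C X Y Z i j" using ext_ff[OF ext cp] .
  have cp1: "is_coproduct C B I B (Idt C B) eB" using coprod_init_r[OF c I eB] .
  have cp2: "is_coproduct C I Y Y eY (Idt C Y)" using coprod_init_l[OF c I eY] .
  have ia: "arr C (Comp C i \<alpha>) B Z" using cat_comp[OF c al i] .
  have e1: "Comp C (Comp C i \<alpha>) (Idt C B) = Comp C i \<alpha>" using cat_idr[OF c ia] .
  have e2: "Comp C (Comp C i \<alpha>) eB = Comp C j eY"
    using initial_uniq[OF c I cat_comp[OF c eB ia] cat_comp[OF c eY j]] .
  have e3: "Comp C j eY = Comp C i eX"
    using initial_uniq[OF c I cat_comp[OF c eY j] cat_comp[OF c eX i]] .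
  have "\<exists>fg. arr C (fst fg) B I \<and> Comp C eX (fst fg) = \<alpha> \<and>
               arr C (snd fg) I Y \<and> Comp C (Idt C Y) (snd fg) = eY \<and>
               Comp C \<beta> (Idt C B) = Comp C eY (fst fg) \<and> Comp C \<beta> eB = Comp C (Idt C Y) (snd fg)"
    using ff_rule[OF ff al eY cp1 ia e1 e2 eX cat_id[OF c Yo] cp2 j e3 refl be eq[symmetric]] .
  then obtain r where r: "arr C r B I" by blast
  show ?thesis using strict_initial[OF ext I r] .
qed

section \<open>Functors and adjunctions\<close>

lemma ex1_uniq: "\<exists>!x. P x \<Longrightarrow> P a \<Longrightarrow> P b \<Longrightarrow> a = b" by blast

lemma fun_ob: "is_functor C D Fo Fa \<Longrightarrow> A \<in> Ob C \<Longrightarrow> Fo A \<in> Ob D"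
  unfolding is_functor_def by blast
lemma fun_arr: "is_functor C D Fo Fa \<Longrightarrow> arr C f A B \<Longrightarrow> arr D (Fa f) (Fo A) (Fo B)"
  unfolding is_functor_def by blast
lemma fun_id: "is_functor C D Fo Fa \<Longrightarrow> A \<in> Ob C \<Longrightarrow> Fa (Idt C A) = Idt D (Fo A)"
  unfolding is_functor_def by blast
lemma fun_comp: "is_functor C D Fo Fa \<Longrightarrow> arr C f A B \<Longrightarrow> arr C g B F \<Longrightarrow>
   Fa (Comp C g f) = Comp D (Fa g) (Fa f)"
  unfolding is_functor_def by blast

locale adj =
  fixes E :: "('o, 'a) category" and S :: "('p, 'b) category"
    and Lo :: "'o \<Rightarrow> 'p" and La :: "'a \<Rightarrow> 'b"
    and Ro :: "'p \<Rightarrow> 'o" and Ra :: "'b \<Rightarrow> 'a"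
    and \<eta> :: "'o \<Rightarrow> 'a"
  assumes cE: "is_category E" and cS: "is_category S"
    and ad: "is_adjunction E S Lo La Ro Ra \<eta>"
begin

lemma FL: "is_functor E S Lo La" using ad unfolding is_adjunction_def by blast
lemma FR: "is_functor S E Ro Ra" using ad unfolding is_adjunction_def by blast
lemma eta_arr: "X \<in> Ob E \<Longrightarrow> arr E (\<eta> X) X (Ro (Lo X))"
  using ad unfolding is_adjunction_def by blast
lemma eta_nat: "arr E f X Y \<Longrightarrow> Comp E (Ra (La f)) (\<eta> X) = Comp E (\<eta> Y) f"
  using ad unfolding is_adjunction_def by blast
lemma univ: "X \<in> Ob E \<Longrightarrow> A \<in> Ob S \<Longrightarrow> arr E f X (Ro A) \<Longrightarrow>
    \<exists>!g. arr S g (Lo X) A \<and> Comp E (Ra g) (\<eta> X) = f"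
  using ad unfolding is_adjunction_def by blast

lemma tr_uniq:
  assumes g1: "arr S g1 (Lo X) A" and g2: "arr S g2 (Lo X) A"
    and eq: "Comp E (Ra g1) (\<eta> X) = Comp E (Ra g2) (\<eta> X)" and X: "X \<in> Ob E"
  shows "g1 = g2"
proof -
  have A: "A \<in> Ob S" using cat_cod[OF cS g1] .
  have "arr E (Comp E (Ra g1) (\<eta> X)) X (Ro A)"
    using cat_comp[OF cE eta_arr[OF X] fun_arr[OF FR g1]] .
  then have ex: "\<exists>!g. arr S g (Lo X) A \<and> Comp E (Ra g) (\<eta> X) = Comp E (Ra g1) (\<eta> X)"
    using univ[OF X A] by blast
  show ?thesis by (rule ex1_uniq[OF ex]) (use g1 g2 eq in simp_all)
qed

lemma tr_nat:
  assumes h: "arr S h (Lo Z) W" and i: "arr E i X Z"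
  shows "Comp E (Comp E (Ra h) (\<eta> Z)) i = Comp E (Ra (Comp S h (La i))) (\<eta> X)"
proof -
  have X: "X \<in> Ob E" using cat_dom[OF cE i] .
  have Z: "Z \<in> Ob E" using cat_cod[OF cE i] .
  have Li: "arr S (La i) (Lo X) (Lo Z)" using fun_arr[OF FL i] .
  have RLi: "arr E (Ra (La i)) (Ro (Lo X)) (Ro (Lo Z))" using fun_arr[OF FR Li] .
  have Rh: "arr E (Ra h) (Ro (Lo Z)) (Ro W)" using fun_arr[OF FR h] .
  have "Comp E (Comp E (Ra h) (\<eta> Z)) i = Comp E (Ra h) (Comp E (\<eta> Z) i)"
    using cat_assoc[OF cE i eta_arr[OF Z] Rh] by simp
  also have "\<dots> = Comp E (Ra h) (Comp E (Ra (La i)) (\<eta> X))" using eta_nat[OF i] by simp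
  also have "\<dots> = Comp E (Comp E (Ra h) (Ra (La i))) (\<eta> X)"
    using cat_assoc[OF cE eta_arr[OF X] RLi Rh] .
  also have "\<dots> = Comp E (Ra (Comp S h (La i))) (\<eta> X)" using fun_comp[OF FR Li h] by simp
  finally show ?thesis .
qed

lemma tr_comp:
  assumes a: "arr S a (Lo T) A" and f: "arr S f A B" and T: "T \<in> Ob E"
  shows "Comp E (Ra (Comp S f a)) (\<eta> T) = Comp E (Ra f) (Comp E (Ra a) (\<eta> T))"
proof -
  have "Comp E (Ra (Comp S f a)) (\<eta> T) = Comp E (Comp E (Ra f) (Ra a)) (\<eta> T)"
    using fun_comp[OF FR a f] by simp
  also have "\<dots> = Comp E (Ra f) (Comp E (Ra a) (\<eta> T))"
    using cat_assoc[OF cE eta_arr[OF T] fun_arr[OF FR a] fun_arr[OF FR f]] by simp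
  finally show ?thesis .
qed

lemma L_coprod:
  assumes cp: "is_coproduct E X Y Z i j"
  shows "is_coproduct S (Lo X) (Lo Y) (Lo Z) (La i) (La j)"
proof -
  have i: "arr E i X Z" and j: "arr E j Y Z" using cp unfolding is_coproduct_def by auto
  have X: "X \<in> Ob E" and Y: "Y \<in> Ob E" and Z: "Z \<in> Ob E"
    using cat_dom[OF cE i] cat_dom[OF cE j] cat_cod[OF cE i] by auto
  have Li: "arr S (La i) (Lo X) (Lo Z)" using fun_arr[OF FL i] .
  have Lj: "arr S (La j) (Lo Y) (Lo Z)" using fun_arr[OF FL j] .
  show ?thesis unfolding is_coproduct_def
  proof (intro conjI allI impI)
    show "arr S (La i) (Lo X) (Lo Z)" by fact
    show "arr S (La j) (Lo Y) (Lo Z)" by fact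
    fix W f g assume f: "arr S f (Lo X) W" and g: "arr S g (Lo Y) W"
    have W: "W \<in> Ob S" using cat_cod[OF cS f] .
    define fb where "fb = Comp E (Ra f) (\<eta> X)"
    define gb where "gb = Comp E (Ra g) (\<eta> Y)"
    have fb: "arr E fb X (Ro W)" unfolding fb_def using cat_comp[OF cE eta_arr[OF X] fun_arr[OF FR f]] .
    have gb: "arr E gb Y (Ro W)" unfolding gb_def using cat_comp[OF cE eta_arr[OF Y] fun_arr[OF FR g]] .
    obtain m where m: "arr E m Z (Ro W)" "Comp E m i = fb" "Comp E m j = gb"
      using cp fb gb unfolding is_coproduct_def by blast
    obtain h where h: "arr S h (Lo Z) W" "Comp E (Ra h) (\<eta> Z) = m"
      using univ[OF Z W m(1)] by blast
    show "\<exists>!h. arr S h (Lo Z) W \<and> Comp S h (La i) = f \<and> Comp S h (La j) = g"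
    proof (rule ex1I[of _ h], intro conjI)
      show "arr S h (Lo Z) W" by fact
      show "Comp S h (La i) = f"
        using tr_uniq[OF cat_comp[OF cS Li h(1)] f _ X] tr_nat[OF h(1) i] h(2) m(2) fb_def by simp
      show "Comp S h (La j) = g"
        using tr_uniq[OF cat_comp[OF cS Lj h(1)] g _ Y] tr_nat[OF h(1) j] h(2) m(3) gb_def by simp
    next
      fix h' assume h': "arr S h' (Lo Z) W \<and> Comp S h' (La i) = f \<and> Comp S h' (La j) = g"
      have h'a: "arr E (Comp E (Ra h') (\<eta> Z)) Z (Ro W)"
        using cat_comp[OF cE eta_arr[OF Z] fun_arr[OF FR]] h' by blast
      have "Comp E (Ra h') (\<eta> Z) = m"
        using coprod_uniq[OF cE cp h'a m(1)] tr_nat[of h' Z W i X] tr_nat[of h' Z W j Y] h' i j m fb_def gb_def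
        by simp
      then show "h' = h" using tr_uniq[of h' Z W h] h' h Z by simp
    qed
  qed
qed

lemma joint:
  assumes pres: "preserves_finite_products E S Lo La" and pr: "is_product E X1 X2 P p q"
    and al: "arr E \<alpha> T (Ro (Lo P))" and be: "arr E \<beta> T (Ro (Lo P))"
    and eqp: "Comp E (Ra (La p)) \<alpha> = Comp E (Ra (La p)) \<beta>"
    and eqq: "Comp E (Ra (La q)) \<alpha> = Comp E (Ra (La q)) \<beta>"
  shows "\<alpha> = \<beta>"
proof -
  have p: "arr E p P X1" and q: "arr E q P X2" using pr unfolding is_product_def by auto
  have T: "T \<in> Ob E" using cat_dom[OF cE al] .
  have P: "P \<in> Ob E" using cat_dom[OF cE p] .
  have LP: "Lo P \<in> Ob S" using fun_ob[OF FL P] .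
  obtain a' where a': "arr S a' (Lo T) (Lo P)" "Comp E (Ra a') (\<eta> T) = \<alpha>"
    using univ[OF T LP al] by blast
  obtain b' where b': "arr S b' (Lo T) (Lo P)" "Comp E (Ra b') (\<eta> T) = \<beta>"
    using univ[OF T LP be] by blast
  have prL: "is_product S (Lo X1) (Lo X2) (Lo P) (La p) (La q)"
    using pres pr unfolding preserves_finite_products_def by blast
  have Lp: "arr S (La p) (Lo P) (Lo X1)" using fun_arr[OF FL p] .
  have Lq: "arr S (La q) (Lo P) (Lo X2)" using fun_arr[OF FL q] .
  have 1: "Comp S (La p) a' = Comp S (La p) b'"
    using tr_uniq[OF cat_comp[OF cS a'(1) Lp] cat_comp[OF cS b'(1) Lp] _ T]
      tr_comp[OF a'(1) Lp T] tr_comp[OF b'(1) Lp T] a'(2) b'(2) eqp by simp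
  have 2: "Comp S (La q) a' = Comp S (La q) b'"
    using tr_uniq[OF cat_comp[OF cS a'(1) Lq] cat_comp[OF cS b'(1) Lq] _ T]
      tr_comp[OF a'(1) Lq T] tr_comp[OF b'(1) Lq T] a'(2) b'(2) eqq by simp
  have "a' = b'" using prod_uniq[OF cS prL a'(1) b'(1) 1 2] .
  then show ?thesis using a'(2) b'(2) by simp
qed

end


theorem proposition2p8:
  fixes E :: "('o, 'a) category" and S :: "('p, 'b) category"
    and Lo :: "'o \<Rightarrow> 'p" and La :: "'a \<Rightarrow> 'b"
    and Ro :: "'p \<Rightarrow> 'o" and Ra :: "'b \<Rightarrow> 'a"
    and \<eta> :: "'o \<Rightarrow> 'a"
  assumes "extensive E" and "has_finite_products E"
    and "extensive S" and "has_finite_products S"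
    and "is_functor S E Ro Ra" and "preserves_finite_coproducts S E Ro Ra"
    and "is_adjunction E S Lo La Ro Ra \<eta>"
    and "preserves_finite_products E S Lo La"
    and "closed_under_subobjects E S Lo Ro \<eta>"
    and "decidable_obj E X"
  shows "iso E (\<eta> X) X (Ro (Lo X))"
proof -
  have cE: "is_category E" using ext_cat[OF assms(1)] .
  have cS: "is_category S" using ext_cat[OF assms(3)] .
  interpret A: adj E S Lo La Ro Ra \<eta> using cE cS assms(7) by unfold_locales
  obtain P p q d where X: "X \<in> Ob E" and pr: "is_product E X X P p q" and d: "arr E d X P"
    and pd: "Comp E p d = Idt E X" and qd: "Comp E q d = Idt E X" and sm: "summand E d X P"
    using assms(10) unfolding decidable_obj_def by blast
  obtain Y n where cp: "is_coproduct E X Y P d n" using sm unfolding summand_def by blast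
  have p: "arr E p P X" and q: "arr E q P X" using pr unfolding is_product_def by auto
  have n: "arr E n Y P" using cp unfolding is_coproduct_def by auto
  have Y: "Y \<in> Ob E" using cat_dom[OF cE n] .
  have P: "P \<in> Ob E" using cat_dom[OF cE p] .
  have eX: "arr E (\<eta> X) X (Ro (Lo X))" using A.eta_arr[OF X] .
  have eY: "arr E (\<eta> Y) Y (Ro (Lo Y))" using A.eta_arr[OF Y] .
  have eP: "arr E (\<eta> P) P (Ro (Lo P))" using A.eta_arr[OF P] .
  have LX: "Lo X \<in> Ob S" using fun_ob[OF A.FL X] .
  have Ld: "arr S (La d) (Lo X) (Lo P)" using fun_arr[OF A.FL d] .
  have Ln: "arr S (La n) (Lo Y) (Lo P)" using fun_arr[OF A.FL n] .
  have Lp: "arr S (La p) (Lo P) (Lo X)" using fun_arr[OF A.FL p] .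
  have Lq: "arr S (La q) (Lo P) (Lo X)" using fun_arr[OF A.FL q] .
  have RLd: "arr E (Ra (La d)) (Ro (Lo X)) (Ro (Lo P))" using fun_arr[OF A.FR Ld] .
  have RLn: "arr E (Ra (La n)) (Ro (Lo Y)) (Ro (Lo P))" using fun_arr[OF A.FR Ln] .
  have RLp: "arr E (Ra (La p)) (Ro (Lo P)) (Ro (Lo X))" using fun_arr[OF A.FR Lp] .
  have RLq: "arr E (Ra (La q)) (Ro (Lo P)) (Ro (Lo X))" using fun_arr[OF A.FR Lq] .
  have RLpd: "Comp E (Ra (La p)) (Ra (La d)) = Idt E (Ro (Lo X))"
  proof -
    have "Comp E (Ra (La p)) (Ra (La d)) = Ra (Comp S (La p) (La d))"
      using fun_comp[OF A.FR Ld Lp] by simp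
    also have "\<dots> = Ra (La (Comp E p d))" using fun_comp[OF A.FL d p] by simp
    also have "\<dots> = Idt E (Ro (Lo X))" using pd fun_id[OF A.FL X] fun_id[OF A.FR LX] by simp
    finally show ?thesis .
  qed
  have RLqd: "Comp E (Ra (La q)) (Ra (La d)) = Idt E (Ro (Lo X))"
  proof -
    have "Comp E (Ra (La q)) (Ra (La d)) = Ra (Comp S (La q) (La d))"
      using fun_comp[OF A.FR Ld Lq] by simp
    also have "\<dots> = Ra (La (Comp E q d))" using fun_comp[OF A.FL d q] by simp
    also have "\<dots> = Idt E (Ro (Lo X))" using qd fun_id[OF A.FL X] fun_id[OF A.FR LX] by simp
    finally show ?thesis .
  qed
  have cpR: "is_coproduct E (Ro (Lo X)) (Ro (Lo Y)) (Ro (Lo P)) (Ra (La d)) (Ra (La n))"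
    using assms(6) A.L_coprod[OF cp] unfolding preserves_finite_coproducts_def by blast
  have mono: "mono E (\<eta> X) X (Ro (Lo X))"
    unfolding mono_def
  proof (intro conjI allI impI)
    show "arr E (\<eta> X) X (Ro (Lo X))" by fact
    fix T g h assume g: "arr E g T X" and h: "arr E h T X"
      and eq: "Comp E (\<eta> X) g = Comp E (\<eta> X) h"
    have T: "T \<in> Ob E" using cat_dom[OF cE g] .
    obtain k where k: "arr E k T P" "Comp E p k = g" "Comp E q k = h"
      using pr g h unfolding is_product_def by blast
    have es: "coprod_functor_ess_surj E X Y P d n" using ext_es[OF assms(1) cp] .
    obtain A B a b V u v c' kk where a: "arr E a A X" and b: "arr E b B Y"
      and cpAB: "is_coproduct E A B V u v" and c': "arr E c' V P"
      and c'u: "Comp E c' u = Comp E d a" and c'v: "Comp E c' v = Comp E n b"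
      and iso: "iso E kk V T" and kkk: "Comp E k kk = c'"
      using es[unfolded coprod_functor_ess_surj_def, rule_format, OF k(1)] by blast
    obtain ki where kk: "arr E kk V T" and ki: "arr E ki T V"
      and kki: "Comp E kk ki = Idt E T"
      using iso unfolding iso_def by blast
    have u: "arr E u A V" and v: "arr E v B V" using cpAB unfolding is_coproduct_def by auto
    have eXg: "arr E (Comp E (\<eta> X) g) T (Ro (Lo X))" using cat_comp[OF cE g eX] .
    have key: "Comp E (\<eta> P) k = Comp E (Ra (La d)) (Comp E (\<eta> X) g)"
    proof (rule A.joint[OF assms(8) pr])
      show "arr E (Comp E (\<eta> P) k) T (Ro (Lo P))" using cat_comp[OF cE k(1) eP] .
      show "arr E (Comp E (Ra (La d)) (Comp E (\<eta> X) g)) T (Ro (Lo P))"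
        using cat_comp[OF cE eXg RLd] .
      have 1: "Comp E (Ra (La p)) (Comp E (\<eta> P) k) = Comp E (\<eta> X) g"
      proof -
        have "Comp E (Ra (La p)) (Comp E (\<eta> P) k) = Comp E (Comp E (Ra (La p)) (\<eta> P)) k"
          using cat_assoc[OF cE k(1) eP RLp] .
        also have "\<dots> = Comp E (Comp E (\<eta> X) p) k" using A.eta_nat[OF p] by simp
        also have "\<dots> = Comp E (\<eta> X) (Comp E p k)" using cat_assoc[OF cE k(1) p eX] by simp
        finally show ?thesis using k(2) by simp
      qed
      have 2: "Comp E (Ra (La q)) (Comp E (\<eta> P) k) = Comp E (\<eta> X) g"
      proof -
        have "Comp E (Ra (La q)) (Comp E (\<eta> P) k) = Comp E (Comp E (Ra (La q)) (\<eta> P)) k"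
          using cat_assoc[OF cE k(1) eP RLq] .
        also have "\<dots> = Comp E (Comp E (\<eta> X) q) k" using A.eta_nat[OF q] by simp
        also have "\<dots> = Comp E (\<eta> X) (Comp E q k)" using cat_assoc[OF cE k(1) q eX] by simp
        finally show ?thesis using k(3) eq by simp
      qed
      have 3: "Comp E (Ra (La p)) (Comp E (Ra (La d)) (Comp E (\<eta> X) g)) = Comp E (\<eta> X) g"
        using cat_assoc[OF cE eXg RLd RLp] RLpd cat_idl[OF cE eXg] by simp
      have 4: "Comp E (Ra (La q)) (Comp E (Ra (La d)) (Comp E (\<eta> X) g)) = Comp E (\<eta> X) g"
        using cat_assoc[OF cE eXg RLd RLq] RLqd cat_idl[OF cE eXg] by simp
      show "Comp E (Ra (La p)) (Comp E (\<eta> P) k) = Comp E (Ra (La p)) (Comp E (Ra (La d)) (Comp E (\<eta> X) g))"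
        using 1 3 by simp
      show "Comp E (Ra (La q)) (Comp E (\<eta> P) k) = Comp E (Ra (La q)) (Comp E (Ra (La d)) (Comp E (\<eta> X) g))"
        using 2 4 by simp
    qed
    define z where "z = Comp E kk v"
    have z: "arr E z B T" unfolding z_def using cat_comp[OF cE v kk] .
    have kz: "Comp E k z = Comp E n b"
      unfolding z_def using cat_assoc[OF cE v kk k(1)] kkk c'v by simp
    have e2: "Comp E (Ra (La d)) (Comp E (Comp E (\<eta> X) g) z) = Comp E (Ra (La n)) (Comp E (\<eta> Y) b)"
    proof -
      have "Comp E (Ra (La n)) (Comp E (\<eta> Y) b) = Comp E (Comp E (Ra (La n)) (\<eta> Y)) b"
        using cat_assoc[OF cE b eY RLn] .
      also have "\<dots> = Comp E (Comp E (\<eta> P) n) b" using A.eta_nat[OF n] by simp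
      also have "\<dots> = Comp E (\<eta> P) (Comp E n b)" using cat_assoc[OF cE b n eP] by simp
      also have "\<dots> = Comp E (\<eta> P) (Comp E k z)" using kz by simp
      also have "\<dots> = Comp E (Comp E (\<eta> P) k) z" using cat_assoc[OF cE z k(1) eP] .
      also have "\<dots> = Comp E (Comp E (Ra (La d)) (Comp E (\<eta> X) g)) z" using key by simp
      also have "\<dots> = Comp E (Ra (La d)) (Comp E (Comp E (\<eta> X) g) z)"
        using cat_assoc[OF cE z eXg RLd] by simp
      finally show ?thesis by simp
    qed
    have Binit: "initial E B"
      using disjoint[OF assms(1) cpR cat_comp[OF cE z eXg] cat_comp[OF cE b eY] e2] .
    obtain eBX where eBX: "arr E eBX B X" using initial_ex[OF Binit X] by blast
    obtain w where w: "arr E w V X" "Comp E w u = a" "Comp E w v = eBX"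
      using cpAB a eBX unfolding is_coproduct_def by blast
    have dw: "arr E (Comp E d w) V P" using cat_comp[OF cE w(1) d] .
    have cdw: "c' = Comp E d w"
    proof (rule coprod_uniq[OF cE cpAB c' dw])
      show "Comp E c' u = Comp E (Comp E d w) u"
        using c'u cat_assoc[OF cE u w(1) d] w(2) by simp
      show "Comp E c' v = Comp E (Comp E d w) v"
        using initial_uniq[OF cE Binit cat_comp[OF cE v c'] cat_comp[OF cE v dw]] .
    qed
    define t where "t = Comp E w ki"
    have t: "arr E t T X" unfolding t_def using cat_comp[OF cE ki w(1)] .
    have kdt: "k = Comp E d t"
    proof -
      have "k = Comp E k (Comp E kk ki)" using kki cat_idr[OF cE k(1)] by simp
      also have "\<dots> = Comp E (Comp E k kk) ki" using cat_assoc[OF cE ki kk k(1)] .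
      also have "\<dots> = Comp E (Comp E d w) ki" using kkk cdw by simp
      also have "\<dots> = Comp E d t" unfolding t_def using cat_assoc[OF cE ki w(1) d] by simp
      finally show ?thesis .
    qed
    have "g = t" using k(2) kdt cat_assoc[OF cE t d p] pd cat_idl[OF cE t] by simp
    moreover have "h = t" using k(3) kdt cat_assoc[OF cE t d q] qd cat_idl[OF cE t] by simp
    ultimately show "g = h" by simp
  qed
  then show ?thesis using assms(9) LX unfolding closed_under_subobjects_def by blast
qed

end
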